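(* Let $a$ be a positive integer with $\sigma(a)\neq 2a$, and let $b,c$ be coprime integers with $c>0$ and $\dfrac{b}{c}=\dfrac{a}{2a-\sigma(a)}$. Let $f$ be a positive integer coprime to $a$, and let $g,h$ be positive integers with $gh=\sigma(f)$. Put $e=bf-bgh+cgh$ and assume $e\neq 0$. Let $x,y$ be positive integers such that $p=hx-1$, $q=gy-1$, $r=xy-1$ are primes, $p\neq q$, none of $p,q,r$ divides $a$, and $\gcd(f,r)=1$. If $$(ex-bg)(ey-bh)=b^2gh+be(f-1),$$ then $apq$ and $afr$ are amicable numbers.
   Context: For a positive integer $N$, $\sigma(N)$ denotes the sum of all positive divisors of $N$. Positive integers $M,N$ are amicable if $\sigma(M)-M=N$ and $\sigma(N)-N=M$. *)

theory Defs
  imports "HOL-Number_Theory.Number_Theory"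
begin

definition sigma :: "nat \<Rightarrow> nat" where
  "sigma N = (\<Sum>d\<in>{d. d dvd N}. d)"

definition amicable :: "nat \<Rightarrow> nat \<Rightarrow> bool" where
  "amicable M N \<longleftrightarrow> M > 0 \<and> N > 0 \<and> int (sigma M) - int M = int N \<and> int (sigma N) - int N = int M"

end

theory Submission
  imports Defs
begin

lemma sigma_mult:
  fixes m n :: nat
  assumes "m > 0" "n > 0" "coprime m n"
  shows "sigma (m * n) = sigma m * sigma n"
proof -
  let ?D = "\<lambda>k::nat. {d. d dvd k}"
  have fin: "finite (?D m)" "finite (?D n)" using assms by auto
  have img: "?D (m*n) = (\<lambda>(d1,d2). d1*d2) ` (?D m \<times> ?D n)"
  proof
    show "?D (m*n) \<subseteq> (\<lambda>(d1,d2). d1*d2) ` (?D m \<times> ?D n)"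
    proof
      fix d assume "d \<in> ?D (m*n)"
      then have "d dvd m*n" by simp
      then obtain u v where "d = u*v" "u dvd m" "v dvd n" by (rule dvd_productE)
      then show "d \<in> (\<lambda>(d1,d2). d1*d2) ` (?D m \<times> ?D n)" by force
    qed
  next
    show "(\<lambda>(d1,d2). d1*d2) ` (?D m \<times> ?D n) \<subseteq> ?D (m*n)"
      by (auto intro: mult_dvd_mono)
  qed
  have inj: "inj_on (\<lambda>(d1,d2). d1*d2) (?D m \<times> ?D n)"
  proof (rule inj_onI, clarsimp)
    fix u v u' v' :: nat
    assume h: "u dvd m" "v dvd n" "u' dvd m" "v' dvd n" "u*v = u'*v'"
    have c1: "coprime u v'" "coprime u' v" "coprime v u'" "coprime v' u"
      using h assms(3) coprime_divisors by (metis coprime_commute)+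
    have "u dvd u'*v'" using h(5) by (metis dvd_triv_left)
    then have a1: "u dvd u'" using c1 by (simp add: coprime_dvd_mult_left_iff)
    have "u' dvd u*v" using h(5) by (metis dvd_triv_left)
    then have a2: "u' dvd u" using c1 by (simp add: coprime_dvd_mult_left_iff)
    have "u = u'" using a1 a2 by (simp add: dvd_antisym)
    moreover have "u > 0" using h(1) assms(1) by (metis dvd_0_left_iff gr0I)
    ultimately show "u = u' \<and> v = v'" using h(5) by simp
  qed
  have "sigma (m*n) = (\<Sum>d\<in>?D (m*n). d)" by (simp add: sigma_def)
  also have "\<dots> = (\<Sum>p\<in>?D m \<times> ?D n. (\<lambda>(d1,d2). d1*d2) p)"
    unfolding img by (rule sum.reindex[OF inj, unfolded comp_def])
  also have "\<dots> = (\<Sum>d1\<in>?D m. \<Sum>d2\<in>?D n. d1*d2)"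
    by (simp add: sum.cartesian_product)
  also have "\<dots> = sigma m * sigma n"
    by (simp add: sigma_def sum_product)
  finally show ?thesis .
qed

lemma sigma_prime:
  assumes "prime (p::nat)"
  shows "sigma p = p + 1"
proof -
  have "{d. d dvd p} = {1, p}" using assms prime_nat_iff by auto
  moreover have "p \<noteq> 1" using assms by auto
  ultimately show ?thesis by (simp add: sigma_def)
qed

lemma sigma_mult_prime:
  fixes n p :: nat
  assumes "n > 0" "prime p" "\<not> p dvd n"
  shows "sigma (n * p) = sigma n * (p + 1)"
proof -
  have "coprime n p" using assms prime_imp_coprime coprime_commute by blast
  then show ?thesis using sigma_mult[of n p] assms sigma_prime prime_gt_0_nat by simp
qed

theorem mainTheorem9:
  fixes a f g h x y :: nat and b c :: int
  assumes "a > 0" and "sigma a \<noteq> 2 * a"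
    and "coprime b c" and "c > 0"
    and "(of_int b / of_int c :: rat) = of_nat a / (2 * of_nat a - of_nat (sigma a))"
    and "f > 0" and "coprime f a"
    and "g > 0" and "h > 0" and "g * h = sigma f"
    and "b * int f - b * int g * int h + c * int g * int h \<noteq> 0"
    and "x > 0" and "y > 0"
    and "prime (h * x - 1)" and "prime (g * y - 1)" and "prime (x * y - 1)"
    and "h * x - 1 \<noteq> g * y - 1"
    and "\<not> (h * x - 1) dvd a" and "\<not> (g * y - 1) dvd a" and "\<not> (x * y - 1) dvd a"
    and "gcd f (x * y - 1) = 1"
    and "let e = b * int f - b * int g * int h + c * int g * int h in
         (e * int x - b * int g) * (e * int y - b * int h) = b^2 * int g * int h + b * e * (int f - 1)"
  shows "amicable (a * (h * x - 1) * (g * y - 1)) (a * f * (x * y - 1))"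
proof -
  define p where "p = h * x - 1"
  define q where "q = g * y - 1"
  define r where "r = x * y - 1"
  define s where "s = sigma a"
  define e where "e = b * int f - b * int g * int h + c * int g * int h"
  have pp: "prime p" "prime q" "prime r" using assms p_def q_def r_def by auto
  have hx: "h * x \<ge> 1" "g * y \<ge> 1" "x * y \<ge> 1" using assms by auto
  have P: "int p = int h * int x - 1" using hx p_def by (simp add: of_nat_diff)
  have Q: "int q = int g * int y - 1" using hx q_def by (simp add: of_nat_diff)
  have R: "int r = int x * int y - 1" using hx r_def by (simp add: of_nat_diff)
  have p0: "p > 0" "q > 0" "r > 0" using pp prime_gt_0_nat by auto
  have qap: "\<not> q dvd a * p"
  proof
    assume "q dvd a * p"
    then have "q dvd a \<or> q dvd p" using pp prime_dvd_mult_iff by blast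
    moreover have "\<not> q dvd p" using pp assms(17) p_def q_def
      by (metis primes_dvd_imp_eq)
    ultimately show False using assms(19) q_def by auto
  qed
  have S1: "sigma (a * p * q) = s * (p+1) * (q+1)"
    using sigma_mult_prime[of "a*p" q] sigma_mult_prime[of a p] pp p0 assms(1) qap
      assms(18) p_def s_def by simp
  have cfr: "\<not> r dvd a * f"
  proof
    assume "r dvd a * f"
    then have "r dvd a \<or> r dvd f" using pp prime_dvd_mult_iff by blast
    moreover have "\<not> r dvd f" using assms(21) r_def pp
      by (metis gcd_nat.absorb2 not_prime_1)
    ultimately show False using assms(20) r_def by auto
  qed
  have S2: "sigma (a * f * r) = s * (g*h) * (r+1)"
    using sigma_mult_prime[of "a*f" r] sigma_mult[of a f] pp p0 assms cfr s_def
    by (simp add: coprime_commute)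
  have den: "(2 * of_nat a - of_nat s :: rat) \<noteq> 0" using assms(2) s_def
    by (metis (mono_tags, lifting) eq_iff_diff_eq_0 of_nat_eq_iff of_nat_mult of_nat_numeral)
  have "(of_int b :: rat) * (2 * of_nat a - of_nat s) = of_int c * of_nat a"
    using assms(5) den assms(4) s_def by (simp add: field_simps)
  then have "(of_int (b * (2 * int a - int s)) :: rat) = of_int (c * int a)" by simp
  then have bc: "b * (2 * int a - int s) = c * int a" by (simp only: of_int_eq_iff)
  have b0: "b \<noteq> 0" using bc assms(1,4) by auto
  have E0: "e * (e * int x * int y - b * int h * int x - b * int g * int y - b * (int f - 1)) = 0"
    using assms(22) unfolding e_def[symmetric] Let_def by (simp add: algebra_simps power2_eq_square)
  have e0: "e \<noteq> 0" using assms(11) e_def by simp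
  have E: "e * int x * int y = b * int h * int x + b * int g * int y + b * (int f - 1)"
    using E0 e0 by simp
  have key: "int s * (int g * int h) * (int x * int y) = int a * (int p * int q + int f * int r)"
  proof -
    have "b * (int s * (int g * int h) * (int x * int y)) = b * (int a * (int p * int q + int f * int r))"
    proof -
      have "b * int s = 2 * b * int a - c * int a" using bc by (simp add: algebra_simps)
      have "b * (int s * (int g * int h) * (int x * int y)) = (b * int s) * (int g * int h) * (int x * int y)"
        by (simp only: mult.assoc)
      also have "\<dots> = (2 * b * int a - c * int a) * (int g * int h) * (int x * int y)"
        using \<open>b * int s = 2 * b * int a - c * int a\<close> by simp
      also have "\<dots> = b * (int a * (int p * int q + int f * int r))"
        unfolding P Q R using arg_cong[OF E, of "\<lambda>t. int a * t"] unfolding e_def by (simp add: algebra_simps)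
      finally show ?thesis .
    qed
    then show ?thesis using b0 by simp
  qed
  have P1: "int (p+1) = int h * int x" "int (q+1) = int g * int y" "int (r+1) = int x * int y"
    using P Q R by simp_all
  have A1: "int (sigma (a * p * q)) = int s * (int h * int x) * (int g * int y)"
    using S1 P1 by (simp only: of_nat_mult)
  have A2: "int (sigma (a * f * r)) = int s * (int g * int h) * (int x * int y)"
    using S2 P1 by (simp only: of_nat_mult)
  have "int (sigma (a * p * q)) = int (sigma (a * f * r))"
    unfolding A1 A2 by (simp add: algebra_simps)
  moreover have "int (sigma (a * p * q)) = int (a*p*q) + int (a*f*r)"
    using A2 key \<open>int (sigma (a * p * q)) = int (sigma (a * f * r))\<close> by (simp add: algebra_simps)
  ultimately show ?thesis
    unfolding amicable_def p_def[symmetric] q_def[symmetric] r_def[symmetric]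
    using assms(1,6) p0 by simp
qed

end
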